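(* Let $\Delta:M_n\to M_n$ be a weak-2-local derivation, and let $p_1,\ldots,p_n$ be mutually orthogonal minimal projections in $M_n$ with $\Delta(p_k)=0$ for $1\le k\le n$. If $\Delta(p_1+e_{1j_0}-e_{i_01})=0$ for some $2\le i_0,j_0\le n$, then $\Delta(e_{i_0j_0})=0$.
   Context: $M_n=M_n(\mathbb{C})$. For $i,j$, $e_{ij}$ is the unique minimal partial isometry in $M_n$ with $e_{ij}^*e_{ij}=p_j$ and $e_{ij}e_{ij}^*=p_i$. A derivation on $M_n$ is a linear map $D$ with $D(ab)=D(a)b+aD(b)$. A (not necessarily linear) map $\Delta:M_n\to M_n$ is a weak-2-local derivation if for every $a,b\in M_n$ and every $\phi\in M_n^*$ there exists a derivation $D_{a,b,\phi}$ such that $\phi\Delta(a)=\phi D_{a,b,\phi}(a)$ and $\phi\Delta(b)=\phi D_{a,b,\phi}(b)$. *)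

theory Defs
  imports "Jordan_Normal_Form.Matrix"
begin

text \<open>M_n = carrier_mat n n of complex matrices.\<close>

definition adj :: "complex mat \<Rightarrow> complex mat" where
  "adj A = mat (dim_col A) (dim_row A) (\<lambda>(i,j). cnj (A $$ (j,i)))"

definition is_projection :: "nat \<Rightarrow> complex mat \<Rightarrow> bool" where
  "is_projection n p \<longleftrightarrow> p \<in> carrier_mat n n \<and> adj p = p \<and> p * p = p"

definition minimal_projection :: "nat \<Rightarrow> complex mat \<Rightarrow> bool" where
  "minimal_projection n p \<longleftrightarrow> is_projection n p \<and> p \<noteq> 0\<^sub>m n n \<and>
     (\<forall>q. is_projection n q \<and> q * p = q \<longrightarrow> q = 0\<^sub>m n n \<or> q = p)"

definition partial_isometry :: "nat \<Rightarrow> complex mat \<Rightarrow> bool" where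
  "partial_isometry n e \<longleftrightarrow> e \<in> carrier_mat n n \<and> e * adj e * e = e"

definition functional :: "nat \<Rightarrow> (complex mat \<Rightarrow> complex) \<Rightarrow> bool" where
  "functional n \<phi> \<longleftrightarrow>
     (\<forall>a\<in>carrier_mat n n. \<forall>b\<in>carrier_mat n n. \<phi> (a + b) = \<phi> a + \<phi> b) \<and>
     (\<forall>a\<in>carrier_mat n n. \<forall>c. \<phi> (c \<cdot>\<^sub>m a) = c * \<phi> a)"

definition derivation :: "nat \<Rightarrow> (complex mat \<Rightarrow> complex mat) \<Rightarrow> bool" where
  "derivation n D \<longleftrightarrow>
     (\<forall>a\<in>carrier_mat n n. D a \<in> carrier_mat n n) \<and>
     (\<forall>a\<in>carrier_mat n n. \<forall>b\<in>carrier_mat n n. D (a + b) = D a + D b) \<and>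
     (\<forall>a\<in>carrier_mat n n. \<forall>c. D (c \<cdot>\<^sub>m a) = c \<cdot>\<^sub>m D a) \<and>
     (\<forall>a\<in>carrier_mat n n. \<forall>b\<in>carrier_mat n n. D (a * b) = D a * b + a * D b)"

definition weak_2_local_derivation :: "nat \<Rightarrow> (complex mat \<Rightarrow> complex mat) \<Rightarrow> bool" where
  "weak_2_local_derivation n \<Delta> \<longleftrightarrow>
     (\<forall>a\<in>carrier_mat n n. \<Delta> a \<in> carrier_mat n n) \<and>
     (\<forall>a\<in>carrier_mat n n. \<forall>b\<in>carrier_mat n n. \<forall>\<phi>. functional n \<phi> \<longrightarrow>
        (\<exists>D. derivation n D \<and> \<phi> (\<Delta> a) = \<phi> (D a) \<and> \<phi> (\<Delta> b) = \<phi> (D b)))"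

end

theory Submission imports Defs begin

declare mult_carrier_mat[simp] add_carrier_mat[simp] minus_carrier_mat[simp]

lemma der_props:
  assumes "derivation n D"
  shows "\<And>a. a \<in> carrier_mat n n \<Longrightarrow> D a \<in> carrier_mat n n"
    "\<And>a b. a \<in> carrier_mat n n \<Longrightarrow> b \<in> carrier_mat n n \<Longrightarrow> D (a + b) = D a + D b"
    "\<And>a c. a \<in> carrier_mat n n \<Longrightarrow> D (c \<cdot>\<^sub>m a) = c \<cdot>\<^sub>m D a"
    "\<And>a b. a \<in> carrier_mat n n \<Longrightarrow> b \<in> carrier_mat n n \<Longrightarrow> D (a * b) = D a * b + a * D b"
  using assms unfolding derivation_def by auto

lemma der_zero:
  assumes "derivation n D"
  shows "D (0\<^sub>m n n) = 0\<^sub>m n n"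
proof -
  have z: "(0\<^sub>m n n :: complex mat) \<in> carrier_mat n n" by simp
  have "D (0\<^sub>m n n) = D ((0::complex) \<cdot>\<^sub>m 0\<^sub>m n n)" by simp
  also have "\<dots> = 0 \<cdot>\<^sub>m D (0\<^sub>m n n)" using der_props(3)[OF assms z] by blast
  also have "\<dots> = 0\<^sub>m n n" using der_props(1)[OF assms z] by (intro eq_matI) auto
  finally show ?thesis .
qed

lemma L:
  assumes der: "derivation n D" and P: "P \<in> carrier_mat n n" and Q: "Q \<in> carrier_mat n n"
    and w: "w \<in> carrier_mat n n" and Pw: "P * w = 0\<^sub>m n n" and wQ: "w * Q = 0\<^sub>m n n"
  shows "P * D w * Q = 0\<^sub>m n n"
proof -
  have Dw: "D w \<in> carrier_mat n n" and DQ: "D Q \<in> carrier_mat n n"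
    using der_props(1)[OF der] w Q by auto
  have "D w * Q + w * D Q = 0\<^sub>m n n"
    using der_props(4)[OF der w Q] wQ der_zero[OF der] by simp
  hence "P * (D w * Q + w * D Q) = 0\<^sub>m n n" using P by simp
  hence "P * (D w * Q) + P * (w * D Q) = 0\<^sub>m n n"
    using mult_add_distrib_mat[OF P, of "D w * Q" n "w * D Q"] Dw DQ w Q by simp
  moreover have "P * (w * D Q) = 0\<^sub>m n n"
    using assoc_mult_mat[OF P w DQ, symmetric] Pw DQ by simp
  ultimately have "P * (D w * Q) = 0\<^sub>m n n"
    using P Dw Q by simp
  thus ?thesis using assoc_mult_mat[OF P Dw Q] by simp
qed

lemma S:
  assumes w2l: "weak_2_local_derivation n \<Delta>"
    and x: "x \<in> carrier_mat n n" and z: "z \<in> carrier_mat n n" and w: "w \<in> carrier_mat n n"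
    and P: "P \<in> carrier_mat n n" and Q: "Q \<in> carrier_mat n n"
    and Dz: "\<Delta> z = 0\<^sub>m n n" and xw: "x = w + c \<cdot>\<^sub>m z"
    and Pw: "P * w = 0\<^sub>m n n" and wQ: "w * Q = 0\<^sub>m n n"
  shows "P * \<Delta> x * Q = 0\<^sub>m n n"
proof -
  have Dx: "\<Delta> x \<in> carrier_mat n n" using w2l x unfolding weak_2_local_derivation_def by auto
  show ?thesis
  proof (rule eq_matI)
    show "dim_row (P * \<Delta> x * Q) = dim_row (0\<^sub>m n n :: complex mat)" using P by simp
    show "dim_col (P * \<Delta> x * Q) = dim_col (0\<^sub>m n n :: complex mat)" using Q by simp
    fix i j assume ij: "i < dim_row (0\<^sub>m n n :: complex mat)" "j < dim_col (0\<^sub>m n n :: complex mat)"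
    define \<phi> where "\<phi> = (\<lambda>Z. (P * Z * Q) $$ (i,j))"
    have lin_add: "\<phi> (a + b) = \<phi> a + \<phi> b" if "a \<in> carrier_mat n n" "b \<in> carrier_mat n n" for a b
    proof -
      have "P * (a + b) * Q = P * a * Q + P * b * Q"
        using that P Q mult_add_distrib_mat[OF P that] add_mult_distrib_mat[of "P*a" n n "P*b" Q n] by simp
      thus ?thesis unfolding \<phi>_def using ij P Q that by simp
    qed
    have lin_smult: "\<phi> (c \<cdot>\<^sub>m a) = c * \<phi> a" if "a \<in> carrier_mat n n" for a c
    proof -
      have "P * (c \<cdot>\<^sub>m a) * Q = c \<cdot>\<^sub>m (P * a * Q)"
        using that P Q mult_smult_distrib[OF P that] mult_smult_assoc_mat[of "P*a" n n Q n] by simp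
      thus ?thesis unfolding \<phi>_def using ij P Q that by simp
    qed
    have "functional n \<phi>" unfolding functional_def using lin_add lin_smult by blast
    then obtain D where der: "derivation n D" and e1: "\<phi> (\<Delta> x) = \<phi> (D x)"
      and e2: "\<phi> (\<Delta> z) = \<phi> (D z)"
      using w2l x z unfolding weak_2_local_derivation_def by blast
    have Dw: "D w \<in> carrier_mat n n" and DDz: "D z \<in> carrier_mat n n"
      using der_props(1)[OF der] w z by auto
    have "D x = D w + c \<cdot>\<^sub>m D z"
      using xw der_props(2)[OF der w, of "c \<cdot>\<^sub>m z"] der_props(3)[OF der z] z by simp
    hence "\<phi> (D x) = \<phi> (D w) + c * \<phi> (D z)"
      using lin_add[OF Dw, of "c \<cdot>\<^sub>m D z"] lin_smult[OF DDz] DDz by simp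
    moreover have "\<phi> (D w) = 0" unfolding \<phi>_def using L[OF der P Q w Pw wQ] ij by simp
    moreover have "\<phi> (D z) = 0" using e2 Dz unfolding \<phi>_def using ij P Q by simp
    ultimately have "\<phi> (\<Delta> x) = 0" using e1 by simp
    thus "(P * \<Delta> x * Q) $$ (i, j) = 0\<^sub>m n n $$ (i, j)" unfolding \<phi>_def using ij by simp
  qed
qed

lemma mult_entry:
  assumes "A \<in> carrier_mat n n" "B \<in> carrier_mat n n" "i < n" "j < n"
  shows "(A * B) $$ (i,j) = (\<Sum>k<n. A $$ (i,k) * B $$ (k,j))"
  using assms by (simp add: scalar_prod_def atLeast0LessThan)

lemma adj_carrier[simp]: "A \<in> carrier_mat n m \<Longrightarrow> adj A \<in> carrier_mat m n"
  unfolding adj_def by auto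

lemma adj_index: "A \<in> carrier_mat n m \<Longrightarrow> i < m \<Longrightarrow> j < n \<Longrightarrow> adj A $$ (i,j) = cnj (A $$ (j,i))"
  unfolding adj_def by auto

lemma proj_diag_nonzero:
  assumes pr: "is_projection n p" and nz: "p \<noteq> 0\<^sub>m n n"
  shows "\<exists>j<n. p $$ (j,j) \<noteq> 0"
proof (rule ccontr)
  assume "\<not> ?thesis"
  hence z: "\<And>j. j < n \<Longrightarrow> p $$ (j,j) = 0" by auto
  have pC: "p \<in> carrier_mat n n" and ad: "adj p = p" and pp: "p * p = p"
    using pr unfolding is_projection_def by auto
  have herm: "p $$ (i,k) = cnj (p $$ (k,i))" if "i < n" "k < n" for i k
    using adj_index[OF pC that] ad by simp
  have "p $$ (k,j) = 0" if kj: "k < n" "j < n" for k j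
  proof -
    have "p $$ (j,j) = (\<Sum>l<n. p $$ (j,l) * p $$ (l,j))"
      using mult_entry[OF pC pC kj(2) kj(2)] pp by simp
    also have "\<dots> = (\<Sum>l<n. of_real ((cmod (p $$ (l,j)))^2))"
      by (rule sum.cong) (auto simp: herm[OF kj(2)] mult.commute complex_mult_cnj cmod_def power2_eq_square)
    finally have "(\<Sum>l<n. (cmod (p $$ (l,j)))^2) = 0"
      using z[OF kj(2)] by (metis of_real_eq_0_iff of_real_sum)
    hence "(cmod (p $$ (k,j)))^2 = 0"
      using kj by (subst (asm) sum_nonneg_eq_0_iff) auto
    thus ?thesis by simp
  qed
  hence "p = 0\<^sub>m n n" using pC by (intro eq_matI) auto
  with nz show False by simp
qed


lemma rank_one:
  assumes mp: "minimal_projection n p" and Z: "Z \<in> carrier_mat n n"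
  shows "\<exists>\<mu>. p * Z * p = \<mu> \<cdot>\<^sub>m p"
proof -
  have pr: "is_projection n p" and nz: "p \<noteq> 0\<^sub>m n n"
    and mn: "\<And>q. is_projection n q \<Longrightarrow> q * p = q \<Longrightarrow> q = 0\<^sub>m n n \<or> q = p"
    using mp unfolding minimal_projection_def by auto
  have pC: "p \<in> carrier_mat n n" and ad: "adj p = p" and pp: "p * p = p"
    using pr unfolding is_projection_def by auto
  have herm: "p $$ (i,k) = cnj (p $$ (k,i))" if "i < n" "k < n" for i k
    using adj_index[OF pC that] ad by simp
  obtain j where j: "j < n" and dnz: "p $$ (j,j) \<noteq> 0" using proj_diag_nonzero[OF pr nz] by auto
  define d where "d = p $$ (j,j)"
  have dnz': "d \<noteq> 0" using dnz d_def by simp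
  have cd: "cnj d = d" using herm[OF j j] d_def by (metis complex_cnj_cnj)
  have ppe: "(\<Sum>k<n. p $$ (r,k) * p $$ (k,s)) = p $$ (r,s)" if "r < n" "s < n" for r s
    using mult_entry[OF pC pC that] pp by simp
  define q where "q = mat n n (\<lambda>(r,s). p $$ (r,j) * p $$ (j,s) / d)"
  have qC: "q \<in> carrier_mat n n" unfolding q_def by simp
  have qi: "q $$ (r,s) = p $$ (r,j) * p $$ (j,s) / d" if "r < n" "s < n" for r s
    unfolding q_def using that by simp
  have adq: "adj q = q"
  proof (rule eq_matI)
    fix r s assume rs: "r < dim_row q" "s < dim_col q"
    hence rs': "r < n" "s < n" using qC by auto
    have "adj q $$ (r,s) = cnj (p $$ (s,j) * p $$ (j,r) / d)"
      using adj_index[OF qC rs'] qi[OF rs'(2,1)] by simp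
    also have "\<dots> = p $$ (r,j) * p $$ (j,s) / d"
      using herm[OF rs'(2) j] herm[OF j rs'(1)] cd by (simp add: mult.commute)
    finally show "adj q $$ (r,s) = q $$ (r,s)" using qi[OF rs'] by simp
  qed (use qC in \<open>auto simp: adj_def\<close>)
  have qq: "q * q = q"
  proof (rule eq_matI)
    fix r s assume rs: "r < dim_row q" "s < dim_col q"
    hence rs': "r < n" "s < n" using qC by auto
    have "(q * q) $$ (r,s) = (\<Sum>k<n. (p $$ (r,j) * p $$ (j,s) / (d*d)) * (p $$ (j,k) * p $$ (k,j)))"
      using mult_entry[OF qC qC rs'] by (auto intro!: sum.cong simp: qi rs')
    also have "\<dots> = (p $$ (r,j) * p $$ (j,s) / (d*d)) * (\<Sum>k<n. p $$ (j,k) * p $$ (k,j))"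
      by (simp add: sum_distrib_left)
    also have "\<dots> = q $$ (r,s)" using ppe[OF j j] qi[OF rs'] dnz' d_def by simp
    finally show "(q * q) $$ (r,s) = q $$ (r,s)" .
  qed (use qC in auto)
  have qp: "q * p = q"
  proof (rule eq_matI)
    fix r s assume rs: "r < dim_row q" "s < dim_col q"
    hence rs': "r < n" "s < n" using qC by auto
    have "(q * p) $$ (r,s) = (\<Sum>k<n. (p $$ (r,j) / d) * (p $$ (j,k) * p $$ (k,s)))"
      using mult_entry[OF qC pC rs'] by (auto intro!: sum.cong simp: qi rs')
    also have "\<dots> = (p $$ (r,j) / d) * (\<Sum>k<n. p $$ (j,k) * p $$ (k,s))"
      by (simp add: sum_distrib_left)
    also have "\<dots> = q $$ (r,s)" using ppe[OF j rs'(2)] qi[OF rs'] by simp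
    finally show "(q * p) $$ (r,s) = q $$ (r,s)" .
  qed (use qC pC in auto)
  have "q \<noteq> 0\<^sub>m n n"
  proof
    assume "q = 0\<^sub>m n n"
    hence "q $$ (j,j) = 0" using j by simp
    thus False using qi[OF j j] dnz' d_def by simp
  qed
  hence qeq: "q = p" using mn[of q] adq qq qp qC unfolding is_projection_def by auto
  have pf: "p $$ (r,s) = p $$ (r,j) * p $$ (j,s) / d" if "r < n" "s < n" for r s
    using qi[OF that] qeq by simp
  have pZC: "p * Z \<in> carrier_mat n n" using pC Z by simp
  have pZ: "(p * Z) $$ (r,l) = p $$ (r,j) / d * (p * Z) $$ (j,l)" if "r < n" "l < n" for r l
  proof -
    have "(p * Z) $$ (r,l) = (\<Sum>k<n. p $$ (r,j) / d * (p $$ (j,k) * Z $$ (k,l)))"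
      using mult_entry[OF pC Z that] by (auto intro!: sum.cong simp: pf that)
    also have "\<dots> = p $$ (r,j) / d * (p * Z) $$ (j,l)"
      using mult_entry[OF pC Z j that(2)] by (simp add: sum_distrib_left)
    finally show ?thesis .
  qed
  define \<mu> where "\<mu> = (p * Z * p) $$ (j,j) / d"
  have "p * Z * p = \<mu> \<cdot>\<^sub>m p"
  proof (rule eq_matI)
    fix r s assume rs: "r < dim_row (\<mu> \<cdot>\<^sub>m p)" "s < dim_col (\<mu> \<cdot>\<^sub>m p)"
    hence rs': "r < n" "s < n" using pC by auto
    have "(p * Z * p) $$ (r,s) = (\<Sum>l<n. (p $$ (r,j) / d * p $$ (j,s) / d) * ((p * Z) $$ (j,l) * p $$ (l,j)))"
      using mult_entry[OF pZC pC rs'] by (auto intro!: sum.cong simp: pZ pf rs')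
    also have "\<dots> = (p $$ (r,j) / d * p $$ (j,s) / d) * (p * Z * p) $$ (j,j)"
      using mult_entry[OF pZC pC j j] by (simp add: sum_distrib_left)
    also have "\<dots> = (\<mu> \<cdot>\<^sub>m p) $$ (r,s)"
      using pf[OF rs'] rs' pC unfolding \<mu>_def by simp
    finally show "(p * Z * p) $$ (r,s) = (\<mu> \<cdot>\<^sub>m p) $$ (r,s)" .
  qed (use pC Z in auto)
  thus ?thesis by blast
qed



lemma zero_prod:
  assumes "A \<in> carrier_mat n n" "B \<in> carrier_mat n n" "P \<in> carrier_mat n n" "Q \<in> carrier_mat n n"
    and "A * P = A" "Q * B = B" "P * Q = 0\<^sub>m n n"
  shows "A * B = 0\<^sub>m n n"
proof -
  have "A * B = (A * P) * (Q * B)" using assms by simp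
  also have "\<dots> = A * ((P * Q) * B)" using assms(1-4) by (simp add: assoc_mult_mat[where n\<^sub>1=n and n\<^sub>2=n and n\<^sub>3=n and n\<^sub>4=n])
  also have "\<dots> = 0\<^sub>m n n" unfolding assms(7) using assms(1,2) by simp
  finally show ?thesis .
qed

lemma pi_facts:
  assumes "partial_isometry n e" "adj e * e = q" "e * adj e = p"
  shows "e \<in> carrier_mat n n" "p * e = e" "e * q = e"
proof -
  show eC: "e \<in> carrier_mat n n" using assms unfolding partial_isometry_def by auto
  have aC: "adj e \<in> carrier_mat n n" using eC by simp
  have "e * adj e * e = e" using assms unfolding partial_isometry_def by auto
  thus "p * e = e" using assms by simp
  show "e * q = e" using \<open>e * adj e * e = e\<close> assms(2) assoc_mult_mat[OF eC aC eC] by simp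
qed

lemma vu_lemma:
  assumes mpb: "minimal_projection n pb"
    and xC: "x \<in> carrier_mat n n" and uC: "u \<in> carrier_mat n n" and vC: "v \<in> carrier_mat n n"
    and pbC: "pb \<in> carrier_mat n n" and paC: "pa \<in> carrier_mat n n" and p1C: "p1 \<in> carrier_mat n n"
    and xs: "adj x * x = pb" and xr: "x * adj x = pa"
    and us: "adj u * u = pb" and p1u: "p1 * u = u" and upb: "u * pb = u"
    and vs: "adj v * v = p1" and pav: "pa * v = v"
    and xpb: "x * pb = x"
  shows "\<exists>\<mu>. \<mu> \<noteq> 0 \<and> v * u = \<mu> \<cdot>\<^sub>m x"
proof -
  note as = assoc_mult_mat[where n\<^sub>1=n and n\<^sub>2=n and n\<^sub>3=n and n\<^sub>4=n]
  have axC: "adj x \<in> carrier_mat n n" using xC by simp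
  define W where "W = adj x * (v * u)"
  have WC: "W \<in> carrier_mat n n" unfolding W_def using axC uC vC by simp
  obtain \<mu> where mu: "pb * W * pb = \<mu> \<cdot>\<^sub>m pb" using rank_one[OF mpb WC] by auto
  have "x * (pb * W * pb) = (x * pb) * W * pb" using xC pbC WC by (simp add: as)
  also have "\<dots> = x * adj x * (v * u) * pb" unfolding W_def using xpb xC axC uC vC pbC by (simp add: as)
  also have "\<dots> = pa * v * (u * pb)" using xr paC vC uC pbC by (simp add: as)
  also have "\<dots> = v * u" using pav upb by simp
  finally have "v * u = \<mu> \<cdot>\<^sub>m x" using mu xpb mult_smult_distrib[OF xC pbC] by simp
  moreover have "\<mu> \<noteq> 0"
  proof
    assume "\<mu> = 0"
    hence vu0: "v * u = 0\<^sub>m n n" using \<open>v * u = \<mu> \<cdot>\<^sub>m x\<close> xC by auto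
    have auC: "adj u \<in> carrier_mat n n" and avC: "adj v \<in> carrier_mat n n" using uC vC by auto
    have "pb = adj u * (p1 * u)" using us p1u by simp
    also have "\<dots> = (adj u * adj v) * (v * u)" using vs[symmetric] auC avC vC uC by (simp add: as)
    also have "\<dots> = 0\<^sub>m n n" using vu0 auC avC by simp
    finally show False using mpb unfolding minimal_projection_def by simp
  qed
  ultimately show ?thesis by blast
qed


theorem lemma2p8:
  fixes n :: nat and \<Delta> :: "complex mat \<Rightarrow> complex mat"
    and p :: "nat \<Rightarrow> complex mat" and e :: "nat \<Rightarrow> nat \<Rightarrow> complex mat"
    and i0 j0 :: nat
  assumes w2l: "weak_2_local_derivation n \<Delta>"
    and minp: "\<And>k. k \<in> {1..n} \<Longrightarrow> minimal_projection n (p k)"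
    and orth: "\<And>k l. k \<in> {1..n} \<Longrightarrow> l \<in> {1..n} \<Longrightarrow> k \<noteq> l \<Longrightarrow> p k * p l = 0\<^sub>m n n"
    and e_pi: "\<And>i j. i \<in> {1..n} \<Longrightarrow> j \<in> {1..n} \<Longrightarrow> partial_isometry n (e i j)"
    and e_src: "\<And>i j. i \<in> {1..n} \<Longrightarrow> j \<in> {1..n} \<Longrightarrow> adj (e i j) * e i j = p j"
    and e_rng: "\<And>i j. i \<in> {1..n} \<Longrightarrow> j \<in> {1..n} \<Longrightarrow> e i j * adj (e i j) = p i"
    and Dp: "\<And>k. k \<in> {1..n} \<Longrightarrow> \<Delta> (p k) = 0\<^sub>m n n"
    and i0: "2 \<le> i0" "i0 \<le> n" and j0: "2 \<le> j0" "j0 \<le> n"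
    and H: "\<Delta> (p 1 + e 1 j0 - e i0 1) = 0\<^sub>m n n"
  shows "\<Delta> (e i0 j0) = 0\<^sub>m n n"
proof -
  note as = assoc_mult_mat[where n\<^sub>1=n and n\<^sub>2=n and n\<^sub>3=n and n\<^sub>4=n]
  note ms = add_mult_distrib_mat[where nr=n and n=n and nc=n] mult_add_distrib_mat[where nr=n and n=n and nc=n]
    minus_mult_distrib_mat[where nr=n and n=n and nc=n] mult_minus_distrib_mat[where nr=n and n=n and nc=n]
  have in1: "1 \<in> {1..n}" and ina: "i0 \<in> {1..n}" and inb: "j0 \<in> {1..n}" using i0 j0 by auto
  have pC: "\<And>k. k \<in> {1..n} \<Longrightarrow> p k \<in> carrier_mat n n"
    using minp unfolding minimal_projection_def is_projection_def by auto
  have pp: "\<And>k. k \<in> {1..n} \<Longrightarrow> p k * p k = p k"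
    using minp unfolding minimal_projection_def is_projection_def by auto
  have eC: "\<And>i j. i \<in> {1..n} \<Longrightarrow> j \<in> {1..n} \<Longrightarrow> e i j \<in> carrier_mat n n"
    and pe: "\<And>i j. i \<in> {1..n} \<Longrightarrow> j \<in> {1..n} \<Longrightarrow> p i * e i j = e i j"
    and ep: "\<And>i j. i \<in> {1..n} \<Longrightarrow> j \<in> {1..n} \<Longrightarrow> e i j * p j = e i j"
    using pi_facts[OF e_pi e_src e_rng] by auto
  define x where "x = e i0 j0"
  define pa where "pa = p i0"
  define pb where "pb = p j0"
  define p1 where "p1 = p 1"
  define I where "I = (1\<^sub>m n :: complex mat)"
  have xC: "x \<in> carrier_mat n n" and paC: "pa \<in> carrier_mat n n" and pbC: "pb \<in> carrier_mat n n"
    and p1C: "p1 \<in> carrier_mat n n" and IC: "I \<in> carrier_mat n n"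
    unfolding x_def pa_def pb_def p1_def I_def using eC pC in1 ina inb by auto
  have MC: "\<Delta> x \<in> carrier_mat n n" using w2l xC unfolding weak_2_local_derivation_def by auto
  have Dp1: "\<Delta> p1 = 0\<^sub>m n n" and Dpa: "\<Delta> pa = 0\<^sub>m n n" and Dpb: "\<Delta> pb = 0\<^sub>m n n"
    unfolding p1_def pa_def pb_def using Dp in1 ina inb by auto
  have pax: "pa * x = x" and xpb: "x * pb = x" unfolding pa_def pb_def x_def using pe ep ina inb by auto
  have papa: "pa * pa = pa" and pbpb: "pb * pb = pb" and p1p1: "p1 * p1 = p1"
    unfolding pa_def pb_def p1_def using pp ina inb in1 by auto
  show ?thesis
  proof (cases "i0 = j0")
    case True
    have mpa: "minimal_projection n pa" unfolding pa_def using minp ina by auto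
    obtain \<mu> where mu: "pa * x * pa = \<mu> \<cdot>\<^sub>m pa" using rank_one[OF mpa xC] by auto
    have "x = \<mu> \<cdot>\<^sub>m pa" using mu pax xpb True unfolding pa_def pb_def by simp
    have "I * \<Delta> x * I = 0\<^sub>m n n"
    proof (rule S[OF w2l xC paC _ IC IC Dpa, of "0\<^sub>m n n" \<mu>])
      show "x = 0\<^sub>m n n + \<mu> \<cdot>\<^sub>m pa" using \<open>x = \<mu> \<cdot>\<^sub>m pa\<close> paC by simp
    qed (auto simp: I_def)
    thus ?thesis using MC unfolding I_def x_def by simp
  next
    case False
    define u where "u = e 1 j0"
    define v where "v = e i0 1"
    define M where "M = \<Delta> x"
    have a1: "i0 \<noteq> 1" and b1: "j0 \<noteq> 1" using i0 j0 by auto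
    have uC: "u \<in> carrier_mat n n" and vC: "v \<in> carrier_mat n n"
      unfolding u_def v_def using eC in1 ina inb by auto
    have p1u: "p1 * u = u" and upb: "u * pb = u" and pav: "pa * v = v" and vp1: "v * p1 = v"
      unfolding u_def v_def p1_def pa_def pb_def using pe ep in1 ina inb by auto
    have papb: "pa * pb = 0\<^sub>m n n" and pbpa: "pb * pa = 0\<^sub>m n n" and pap1: "pa * p1 = 0\<^sub>m n n"
      and p1pa: "p1 * pa = 0\<^sub>m n n" and pbp1: "pb * p1 = 0\<^sub>m n n" and p1pb: "p1 * pb = 0\<^sub>m n n"
      unfolding pa_def pb_def p1_def using orth in1 ina inb False a1 b1 by auto
    have xx: "x * x = 0\<^sub>m n n" by (rule zero_prod[OF xC xC pbC paC xpb pax pbpa])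
    have xpa: "x * pa = 0\<^sub>m n n" by (rule zero_prod[OF xC paC pbC paC xpb papa pbpa])
    have xu: "x * u = 0\<^sub>m n n" by (rule zero_prod[OF xC uC pbC p1C xpb p1u pbp1])
    have pau: "pa * u = 0\<^sub>m n n" by (rule zero_prod[OF paC uC paC p1C papa p1u pap1])
    have uu: "u * u = 0\<^sub>m n n" by (rule zero_prod[OF uC uC pbC p1C upb p1u pbp1])
    have vv: "v * v = 0\<^sub>m n n" by (rule zero_prod[OF vC vC p1C paC vp1 pav p1pa])
    have vx: "v * x = 0\<^sub>m n n" by (rule zero_prod[OF vC xC p1C paC vp1 pax p1pa])
    have vpb: "v * pb = 0\<^sub>m n n" by (rule zero_prod[OF vC pbC p1C pbC vp1 pbpb p1pb])
    have vpa: "v * pa = 0\<^sub>m n n" by (rule zero_prod[OF vC paC p1C paC vp1 papa p1pa])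
    have pbu: "pb * u = 0\<^sub>m n n" by (rule zero_prod[OF pbC uC pbC p1C pbpb p1u pbp1])
    have x0: "x = x + 0 \<cdot>\<^sub>m p1" using xC p1C by (intro eq_matI) auto
    have A: "(I - pa) * M * (I - pb) = 0\<^sub>m n n" unfolding M_def
    proof (rule S[OF w2l xC p1C xC _ _ Dp1 x0])
      show "(I - pa) * x = 0\<^sub>m n n" using xC paC IC pax by (simp add: ms I_def)
      show "x * (I - pb) = 0\<^sub>m n n" using xC pbC IC xpb by (simp add: ms I_def)
    qed (use IC paC pbC in auto)
    have B0: "(I - pa) * M * x = 0\<^sub>m n n" unfolding M_def
    proof (rule S[OF w2l xC p1C xC _ xC Dp1 x0])
      show "(I - pa) * x = 0\<^sub>m n n" using xC paC IC pax by (simp add: ms I_def)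
      show "x * x = 0\<^sub>m n n" by (rule xx)
    qed (use IC paC pbC in auto)
    have B1: "(I - pa) * M * (x + pb) = 0\<^sub>m n n" unfolding M_def
    proof (rule S[OF w2l xC paC _ _ _ Dpa, of "x - pa" _ _ 1])
      show "x = x - pa + 1 \<cdot>\<^sub>m pa" using xC paC by (intro eq_matI) auto
      show "(I - pa) * (x - pa) = 0\<^sub>m n n" using xC paC IC pax papa by (simp add: ms I_def)
      show "(x - pa) * (x + pb) = 0\<^sub>m n n" using xC paC pbC xx xpb pax papb
        by (simp add: ms, intro eq_matI, auto)
    qed (use IC xC paC pbC in auto)
    have B: "(I - pa) * M * pb = 0\<^sub>m n n"
    proof -
      have "(I - pa) * M * (x + pb) = (I - pa) * M * x + (I - pa) * M * pb"
        using IC paC MC xC pbC unfolding M_def by (simp add: ms)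
      thus ?thesis using B0 B1 IC paC MC pbC unfolding M_def by (simp add: mult_carrier_mat[where nr=n and n=n and nc=n])
    qed
    have C0: "x * M * (I - pb) = 0\<^sub>m n n" unfolding M_def
    proof (rule S[OF w2l xC p1C xC xC _ Dp1 x0])
      show "x * (I - pb) = 0\<^sub>m n n" using xC pbC IC xpb by (simp add: ms I_def)
      show "x * x = 0\<^sub>m n n" by (rule xx)
    qed (use IC paC pbC in auto)
    have C1: "(x + pa) * M * (I - pb) = 0\<^sub>m n n" unfolding M_def
    proof (rule S[OF w2l xC pbC _ _ _ Dpb, of "x - pb" _ _ 1])
      show "x = x - pb + 1 \<cdot>\<^sub>m pb" using xC pbC by (intro eq_matI) auto
      show "(x + pa) * (x - pb) = 0\<^sub>m n n" using xC paC pbC xx xpb pax papb by (simp add: ms)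
      show "(x - pb) * (I - pb) = 0\<^sub>m n n" using xC pbC IC xpb pbpb by (simp add: ms I_def)
    qed (use IC xC paC pbC in auto)
    have C: "pa * M * (I - pb) = 0\<^sub>m n n"
    proof -
      have "(x + pa) * M * (I - pb) = x * M * (I - pb) + pa * M * (I - pb)"
        using IC paC MC xC pbC unfolding M_def
        by (simp only: add_mult_distrib_mat[where nr=n and n=n and nc=n] mult_carrier_mat[where nr=n and n=n and nc=n] minus_carrier_mat)
      thus ?thesis using C0 C1 IC paC MC pbC unfolding M_def by (simp add: mult_carrier_mat[where nr=n and n=n and nc=n])
    qed
    define y where "y = p1 + u - v"
    have yC: "y \<in> carrier_mat n n" unfolding y_def using p1C uC vC by simp
    have Dy: "\<Delta> y = 0\<^sub>m n n" using H unfolding y_def p1_def u_def v_def .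
    have mpb: "minimal_projection n pb" unfolding pb_def using minp inb by auto
    obtain \<mu> where mnz: "\<mu> \<noteq> 0" and vu: "v * u = \<mu> \<cdot>\<^sub>m x"
      using vu_lemma[OF mpb xC uC vC pbC paC p1C _ _ _ p1u upb _ pav xpb]
        e_src e_rng in1 ina inb unfolding x_def u_def v_def pa_def pb_def p1_def by blast
    define c where "c = 1 / \<mu>"
    have cmu: "c * \<mu> = 1" unfolding c_def using mnz by simp
    have Px: "(pa + v) * x = x" using paC vC xC pax vx by (simp add: ms)
    have Py: "(pa + v) * y = \<mu> \<cdot>\<^sub>m x" unfolding y_def
      using paC vC xC uC p1C pap1 pau pav vp1 vu vv
      by (simp add: ms, intro eq_matI, auto)
    have xQ: "x * (pb - u) = x" using pbC uC xC xpb xu by (simp add: ms, intro eq_matI, auto)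
    have yQ: "y * (pb - u) = \<mu> \<cdot>\<^sub>m x" unfolding y_def
      using pbC vC xC uC p1C p1pb p1u upb uu vpb vu
      by (simp add: ms, intro eq_matI, auto)
    have D: "(pa + v) * M * (pb - u) = 0\<^sub>m n n" unfolding M_def
    proof (rule S[OF w2l xC yC _ _ _ Dy, of "x - c \<cdot>\<^sub>m y" _ _ c])
      show "x = x - c \<cdot>\<^sub>m y + c \<cdot>\<^sub>m y" using xC yC by (intro eq_matI) auto
      have "(pa + v) * (x - c \<cdot>\<^sub>m y) = (pa + v) * x - c \<cdot>\<^sub>m ((pa + v) * y)"
        using paC vC xC yC mult_minus_distrib_mat[of "pa + v" n n x n "c \<cdot>\<^sub>m y"]
          mult_smult_distrib[of "pa + v" n n y n c] by simp
      also have "\<dots> = 0\<^sub>m n n" unfolding Px Py using xC cmu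
        by (intro eq_matI) (auto simp: mult.assoc[symmetric])
      finally show "(pa + v) * (x - c \<cdot>\<^sub>m y) = 0\<^sub>m n n" .
      have "(x - c \<cdot>\<^sub>m y) * (pb - u) = x * (pb - u) - c \<cdot>\<^sub>m (y * (pb - u))"
        using pbC uC xC yC minus_mult_distrib_mat[of x n n "c \<cdot>\<^sub>m y" "pb - u" n]
          mult_smult_assoc_mat[of y n n "pb - u" n c] by simp
      also have "\<dots> = 0\<^sub>m n n" unfolding xQ yQ using xC cmu
        by (intro eq_matI) (auto simp: mult.assoc[symmetric])
      finally show "(x - c \<cdot>\<^sub>m y) * (pb - u) = 0\<^sub>m n n" .
    qed (use xC yC paC pbC uC vC in auto)
    note mc = mult_carrier_mat[where nr=n and n=n and nc=n]
    have MC': "M \<in> carrier_mat n n" unfolding M_def by (rule MC)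
    have Isplit: "I = (I - pb) + pb" using IC pbC by (intro eq_matI) auto
    have Isplit': "I = (I - pa) + pa" using IC paC by (intro eq_matI) auto
    have L1: "(I - pa) * M = 0\<^sub>m n n"
    proof -
      have "(I - pa) * M = (I - pa) * M * I" using IC paC MC' unfolding I_def by simp
      also have "\<dots> = (I - pa) * M * (I - pb) + (I - pa) * M * pb"
        by (subst Isplit) (use IC paC pbC MC' in \<open>simp add: ms mc minus_carrier_mat\<close>)
      also have "\<dots> = 0\<^sub>m n n" using A B by simp
      finally show ?thesis .
    qed
    have L2: "M = pa * M"
    proof -
      have "M = I * M" using MC' unfolding I_def by simp
      also have "\<dots> = (I - pa) * M + pa * M"
        by (subst Isplit') (use IC paC MC' in \<open>simp add: ms mc minus_carrier_mat\<close>)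
      also have "\<dots> = pa * M" using L1 paC MC' by (simp add: mc)
      finally show ?thesis .
    qed
    have L3: "M = pa * M * pb"
    proof -
      have "pa * M = pa * M * I" using paC MC' unfolding I_def by simp
      also have "\<dots> = pa * M * (I - pb) + pa * M * pb"
        by (subst Isplit) (use IC paC pbC MC' in \<open>simp add: ms mc minus_carrier_mat\<close>)
      also have "\<dots> = pa * M * pb" using C paC pbC MC' by (simp add: mc)
      finally show ?thesis using L2 by simp
    qed
    define K where "K = pa * M * pb"
    have KC: "K \<in> carrier_mat n n" unfolding K_def using paC MC' pbC by (simp add: mc)
    have paK: "pa * K = K"
    proof -
      have "pa * K = (pa * pa) * (M * pb)" unfolding K_def using paC MC' pbC by (simp add: as mc)
      also have "\<dots> = K" unfolding K_def using paC MC' pbC papa by (simp add: as mc)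
      finally show ?thesis .
    qed
    have vK: "v * K = 0\<^sub>m n n"
    proof -
      have "v * K = (v * pa) * M * pb" unfolding K_def using vC paC MC' pbC by (simp add: as mc)
      thus ?thesis using vpa MC' pbC by (simp add: mc)
    qed
    have Kpb: "K * pb = K" unfolding K_def using paC MC' pbC pbpb by (simp add: as mc)
    have Ku: "K * u = 0\<^sub>m n n"
    proof -
      have "K * u = pa * M * (pb * u)" unfolding K_def using paC MC' pbC uC by (simp add: as mc)
      thus ?thesis using pbu paC MC' by (simp add: mc)
    qed
    have "(pa + v) * K * (pb - u) = K"
    proof -
      have "(pa + v) * K = K" using paK vK paC vC KC by (simp add: ms)
      hence "(pa + v) * K * (pb - u) = K * (pb - u)" by simp
      also have "\<dots> = K" using Kpb Ku KC pbC uC by (simp add: ms, intro eq_matI, auto)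
      finally show ?thesis .
    qed
    hence "K = 0\<^sub>m n n" using D L3 unfolding K_def by simp
    thus ?thesis using L3 unfolding K_def M_def x_def by simp
  qed
qed

end
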